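(* Let $a\le b$ be integers and $i\in[a,b]$. Then in $\mathcal{K}$ $$[b-a+2]_q\,u_i\,u_{[a,b]}=q^{\,i-a+1}[b-i+1]_q\,u_{[a-1,b]}+[i-a+1]_q\,u_{[a,b+1]}.$$ Moreover, this identity is a consequence of the defining relations $(q+1)u_j^2=qu_ju_{j-1}+u_ju_{j+1}$ for $j=a,a+1,\dots,b$ only.
   Context: Let $\mathbf{k}$ be a field of characteristic zero and $q\in\mathbf{k}$ an element that is not a nontrivial root of unity (so $[m]_q\ne 0$ for $m\ge 1$). Notation: $[m]_q=1+q+\dots+q^{m-1}$, $[m]_q!=\prod_{i=1}^m[i]_q$, $\binom{m}{k}_q=[m]_q!/([k]_q![m-k]_q!)$, and $[a,b]=\{a,a+1,\dots,b\}$. The Klyachko algebra $\mathcal{K}$ is the commutative $\mathbf{k}$-algebra generated by $u_i$, $i\in\mathbb{Z}$, subject to the relations $(q+1)u_i^2=qu_iu_{i-1}+u_iu_{i+1}$ for all $i\in\mathbb{Z}$. For a finite set $I\subset\mathbb{Z}$, $u_I=\prod_{i\in I}u_i$. *)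

theory Defs
  imports Main
begin

definition qint :: "'a::comm_semiring_1 \<Rightarrow> nat \<Rightarrow> 'a" where
  "qint q m = (\<Sum>j<m. q ^ j)"

definition uprod :: "(int \<Rightarrow> 'r::comm_ring_1) \<Rightarrow> int set \<Rightarrow> 'r" where
  "uprod u I = (\<Prod>i\<in>I. u i)"

text \<open>Defining relation of the Klyachko algebra at index j, with Q the image of q.\<close>
definition klyachko_rel :: "'r::comm_ring_1 \<Rightarrow> (int \<Rightarrow> 'r) \<Rightarrow> int \<Rightarrow> bool" where
  "klyachko_rel Q u j \<longleftrightarrow> (Q + 1) * (u j)^2 = Q * u j * u (j - 1) + u j * u (j + 1)"

text \<open>Unital ring homomorphism (structure map making a commutative ring a k-algebra).\<close>
definition unital_ring_hom :: "('k::comm_ring_1 \<Rightarrow> 'r::comm_ring_1) \<Rightarrow> bool" where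
  "unital_ring_hom phi \<longleftrightarrow> phi 1 = 1 \<and> (\<forall>x y. phi (x + y) = phi x + phi y) \<and>
      (\<forall>x y. phi (x * y) = phi x * phi y)"

end

theory Submission
  imports Defs
begin

lemma rec_diff:
  fixes x :: "nat \<Rightarrow> 'r::comm_ring_1"
  assumes R: "\<And>k. 1 \<le> k \<Longrightarrow> k \<le> N \<Longrightarrow> (Q+1)*x k = Q * x (k-1) + x (k+1)"
  shows "k \<le> N \<Longrightarrow> x (k+1) - x k = Q^k * (x 1 - x 0)"
proof (induction k)
  case 0 then show ?case by simp
next
  case (Suc k)
  have "(Q+1)*x (Suc k) = Q * x k + x (Suc k+1)" using R[of "Suc k"] Suc by simp
  then have "x (Suc k + 1) - x (Suc k) = Q * (x (k+1) - x k)" by (simp add: algebra_simps)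
  then show ?case using Suc by simp
qed

lemma rec_val:
  fixes x :: "nat \<Rightarrow> 'r::comm_ring_1"
  assumes R: "\<And>k. 1 \<le> k \<Longrightarrow> k \<le> N \<Longrightarrow> (Q+1)*x k = Q * x (k-1) + x (k+1)"
  shows "k \<le> N + 1 \<Longrightarrow> x k = x 0 + qint Q k * (x 1 - x 0)"
proof (induction k)
  case 0 then show ?case by (simp add: qint_def)
next
  case (Suc k)
  have kN: "k \<le> N" using Suc.prems by simp
  have d: "x (k+1) - x k = Q^k * (x 1 - x 0)" using rec_diff[OF R kN] by blast
  have ih: "x k = x 0 + qint Q k * (x 1 - x 0)" using Suc.IH kN by simp
  have qs: "qint Q (Suc k) = qint Q k + Q^k" by (simp add: qint_def)
  have "x (Suc k) = x k + (x (k+1) - x k)" by simp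
  also have "\<dots> = x 0 + qint Q k * (x 1 - x 0) + Q^k * (x 1 - x 0)" using ih d by simp
  also have "\<dots> = x 0 + qint Q (Suc k) * (x 1 - x 0)" unfolding qs by (simp add: distrib_right)
  finally show ?case .
qed

lemma qint_add: "qint Q (m + l) = qint Q m + Q^m * qint Q l"
  by (induction l) (simp_all add: qint_def algebra_simps power_add)

lemma phi_sum:
  assumes hom: "unital_ring_hom phi"
  shows "phi (qint q m) = qint (phi q) m \<and> phi (q^m) = phi q ^ m"
proof (induction m)
  case 0
  have a: "\<forall>x y. phi (x + y) = phi x + phi y" using hom unfolding unital_ring_hom_def by blast
  have "phi (0+0) = phi 0 + phi 0" using a by blast
  then have "phi 0 = 0" by simp
  then show ?case using hom by (simp add: qint_def unital_ring_hom_def)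
next
  case (Suc m)
  have "qint q (Suc m) = qint q m + q^m" by (simp add: qint_def)
  then show ?case using Suc hom by (simp add: qint_def unital_ring_hom_def)
qed

theorem mainTheorem1:
  fixes q :: "'k::field_char_0"
    and phi :: "'k \<Rightarrow> 'r::comm_ring_1"
    and u :: "int \<Rightarrow> 'r"
    and a b i :: int
  assumes q_not_root: "\<forall>n::nat. n \<ge> 1 \<longrightarrow> q ^ n = 1 \<longrightarrow> q = 1"
    and hom: "unital_ring_hom phi"
    and ab: "a \<le> b"
    and i: "i \<in> {a..b}"
    and rel: "\<forall>j\<in>{a..b}. klyachko_rel (phi q) u j"
  shows "phi (qint q (nat (b - a + 2))) * u i * uprod u {a..b}
       = phi (q ^ nat (i - a + 1) * qint q (nat (b - i + 1))) * uprod u {a - 1..b}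
         + phi (qint q (nat (i - a + 1))) * uprod u {a..b + 1}"
proof -
  define Q where "Q = phi q"
  define P where "P = uprod u {a..b}"
  define n where "n = nat (b - a)"
  define m where "m = nat (i - a + 1)"
  define x where "x k = u (a - 1 + int k) * P" for k
  have hmul: "phi (s * t) = phi s * phi t" for s t using hom unfolding unital_ring_hom_def by blast
  have key: "u j * P = u j * u j * uprod u ({a..b} - {j})" if "j \<in> {a..b}" for j
    using that unfolding P_def uprod_def
    by (simp add: prod.remove[of "{a..b}" j u])
  have R: "(Q+1)*x k = Q * x (k-1) + x (k+1)" if "1 \<le> k" "k \<le> n + 1" for k
  proof -
    define j where "j = a - 1 + int k"
    have j: "j \<in> {a..b}" using that ab unfolding j_def n_def by auto
    have r: "(Q + 1) * (u j)^2 = Q * u j * u (j - 1) + u j * u (j + 1)"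
      using rel j unfolding klyachko_rel_def Q_def by blast
    have Pj: "P = u j * uprod u ({a..b} - {j})" using j unfolding P_def uprod_def
      by (simp add: prod.remove[of "{a..b}" j u])
    have e1: "a - 1 + int (k - 1) = j - 1" using that unfolding j_def by auto
    have e2: "a - 1 + int (k + 1) = j + 1" unfolding j_def by auto
    have "(Q+1)*x k = (Q + 1) * (u j)^2 * uprod u ({a..b} - {j})"
      unfolding x_def j_def[symmetric] key[OF j] by (simp add: power2_eq_square algebra_simps)
    also have "\<dots> = (Q * u j * u (j - 1) + u j * u (j + 1)) * uprod u ({a..b} - {j})"
      using r by simp
    also have "\<dots> = Q * x (k-1) + x (k+1)"
      unfolding x_def e1 e2 Pj by (simp add: algebra_simps)
    finally show ?thesis .
  qed
  have val: "x k = x 0 + qint Q k * (x 1 - x 0)" if "k \<le> n + 2" for k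
    using rec_val[of "n+1" Q x k] R that by simp
  have m: "1 \<le> m" "m \<le> n + 1" using i unfolding m_def n_def by auto
  have x0: "x 0 = uprod u {a - 1..b}"
  proof -
    have "{a - 1..b} = insert (a - 1) {a..b}" using ab by auto
    then show ?thesis unfolding x_def P_def uprod_def by simp
  qed
  have xN: "x (n+2) = uprod u {a..b + 1}"
  proof -
    have "{a..b+1} = insert (b + 1) {a..b}" using ab by auto
    moreover have "a - 1 + int (n + 2) = b + 1" unfolding n_def using ab by simp
    ultimately show ?thesis unfolding x_def P_def uprod_def by (simp add: mult.commute add.commute)
  qed
  have xm: "x m = u i * P" unfolding x_def m_def using i by simp
  have e3: "nat (b - a + 2) = n + 2" "nat (b - i + 1) = n + 2 - m"
    unfolding n_def m_def using ab i by auto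
  have qsplit: "qint Q (n + 2) = qint Q m + Q^m * qint Q (n + 2 - m)"
    using qint_add[of Q m "n + 2 - m"] m by simp
  have "qint Q (n+2) * x m = Q^m * qint Q (n + 2 - m) * x 0 + qint Q m * x (n+2)"
  proof -
    have v1: "x m = x 0 + qint Q m * (x 1 - x 0)" using val[of m] m by simp
    have v2: "x (n+2) = x 0 + (qint Q m + Q^m * qint Q (n + 2 - m)) * (x 1 - x 0)"
      using val[of "n+2"] qsplit by simp
    show ?thesis unfolding qsplit v1 v2 by (simp add: algebra_simps)
  qed
  moreover have "qint Q (n+2) * x m = phi (qint q (nat (b - a + 2))) * u i * uprod u {a..b}"
    unfolding xm e3 Q_def P_def by (simp add: phi_sum[OF hom] mult.assoc)
  moreover have "phi (q ^ nat (i - a + 1) * qint q (nat (b - i + 1))) = Q^m * qint Q (n + 2 - m)"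
    unfolding hmul e3 Q_def m_def by (simp add: phi_sum[OF hom])
  moreover have "phi (qint q (nat (i - a + 1))) = qint Q m"
    unfolding Q_def m_def by (simp add: phi_sum[OF hom])
  ultimately show ?thesis unfolding x0 xN by simp
qed

end
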